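(* Let $A_1,\dots,A_m\in\mathbb{S}^n$, $b\in\mathbb{R}^m$, $C\in\mathbb{S}^n$, and let Assumption 1 hold for some $p$, with $m'$ the associated dimension. Let $Y\in\mathcal{M}_p$ be a second-order critical point of (P). If $\operatorname{rank}(Y)<p$, or if $\operatorname{rank}(Y)=p$ and $\dim\mathcal{F}_{YY^\top}<\frac{p(p+1)}{2}-m'+p$, then $Y$ is globally optimal for (P) and $X=YY^\top$ is globally optimal for (SDP).
   Context: $\mathbb{S}^n$ is the space of real symmetric $n\times n$ matrices; $\langle U,V\rangle=\operatorname{tr}(U^\top V)$. $\mathcal{A}:\mathbb{S}^n\to\mathbb{R}^m$, $\mathcal{A}(X)_i=\langle A_i,X\rangle$, adjoint $\mathcal{A}^*(\nu)=\sum_i\nu_iA_i$. (SDP): minimize $\langle C,X\rangle$ over $X\in\mathcal{C}=\{X\in\mathbb{S}^n:\mathcal{A}(X)=b,\ X\succeq0\}$ (assumed non-empty). $\mathcal{M}_p=\{Y\in\mathbb{R}^{n\times p}:\mathcal{A}(YY^\top)=b\}$; (P): minimize $g(Y)=\langle CY,Y\rangle$ over $\mathcal{M}_p$. Assumption 1 (for $p$ with $\mathcal{M}_p\ne\emptyset$): either (a) $A_1Y,\dots,A_mY$ are linearly independent for all $Y\in\mathcal{M}_p$, or (b) $\operatorname{span}\{A_1Y,\dots,A_mY\}$ has constant dimension for all $Y$ in an open neighborhood of $\mathcal{M}_p$ in $\mathbb{R}^{n\times p}$; in either case $m'$ denotes the dimension of $\operatorname{span}\{A_1Y,\dots,A_mY\}$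 for $Y\in\mathcal{M}_p$. For $Y\in\mathcal{M}_p$: $T_Y=\{\dot Y:\langle A_iY,\dot Y\rangle=0\ \forall i\}$; $G_{ij}=\langle A_iY,A_jY\rangle$; $\mu=G^\dagger\mathcal{A}(CYY^\top)$; $S(Y)=C-\mathcal{A}^*(\mu)$. $Y$ is second-order critical if $S(Y)Y=0$ and $\langle\dot Y,S(Y)\dot Y\rangle\ge0$ for all $\dot Y\in T_Y$. A face of the convex set $\mathcal{C}$ is a convex subset $\mathcal{F}\subseteq\mathcal{C}$ such that every closed segment in $\mathcal{C}$ with a relative interior point in $\mathcal{F}$ has both endpoints in $\mathcal{F}$; for $X\in\mathcal{C}$, $\mathcal{F}_X$ is the unique face of $\mathcal{C}$ containing $X$ in its relative interior, and its dimension is that of its affine hull. *)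

theory Defs
  imports "HOL-Analysis.Analysis"
begin

text \<open>Matrices are Cartesian-product types: n x p real matrices are real^'p^'n
 (row index 'n, column index 'p); the m constraints are indexed by a finite type 'm.\<close>

definition symmetric_mat :: "real^'n^'n \<Rightarrow> bool" where
  "symmetric_mat X \<longleftrightarrow> transpose X = X"

definition psd :: "real^'n^'n \<Rightarrow> bool" where
  "psd X \<longleftrightarrow> symmetric_mat X \<and> (\<forall>x. 0 \<le> x \<bullet> (X *v x))"

definition minner :: "real^'p^'n \<Rightarrow> real^'p^'n \<Rightarrow> real" where
  "minner U V = trace (transpose U ** V)"

definition Aop :: "('m \<Rightarrow> real^'n^'n) \<Rightarrow> real^'n^'n \<Rightarrow> real^'m" where
  "Aop A X = (\<chi> i. minner (A i) X)"

definition Aadj :: "('m::finite \<Rightarrow> real^'n^'n) \<Rightarrow> real^'m \<Rightarrow> real^'n^'n" where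
  "Aadj A \<nu> = (\<Sum>i\<in>UNIV. (\<nu> $ i) *\<^sub>R A i)"

definition SDP_set :: "('m \<Rightarrow> real^'n^'n) \<Rightarrow> real^'m \<Rightarrow> (real^'n^'n) set" where
  "SDP_set A b = {X. symmetric_mat X \<and> Aop A X = b \<and> psd X}"

definition Mp :: "('m \<Rightarrow> real^'n^'n) \<Rightarrow> real^'m \<Rightarrow> (real^'p^'n) set" where
  "Mp A b = {Y. Aop A (Y ** transpose Y) = b}"

definition gobj :: "real^'n^'n \<Rightarrow> real^'p^'n \<Rightarrow> real" where
  "gobj C Y = minner (C ** Y) Y"

definition tangent :: "('m \<Rightarrow> real^'n^'n) \<Rightarrow> real^'p^'n \<Rightarrow> (real^'p^'n) set" where
  "tangent A Y = {Yd. \<forall>i. minner (A i ** Y) Yd = 0}"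

definition gram :: "('m \<Rightarrow> real^'n^'n) \<Rightarrow> real^'p^'n \<Rightarrow> real^'m^'m" where
  "gram A Y = (\<chi> i j. minner (A i ** Y) (A j ** Y))"

definition pinv :: "real^'k^'k \<Rightarrow> real^'k^'k" where
  "pinv M = (THE P. M ** P ** M = M \<and> P ** M ** P = P \<and>
                    transpose (M ** P) = M ** P \<and> transpose (P ** M) = P ** M)"

definition mult_mu :: "('m \<Rightarrow> real^'n^'n) \<Rightarrow> real^'n^'n \<Rightarrow> real^'p^'n \<Rightarrow> real^'m" where
  "mult_mu A C Y = pinv (gram A Y) *v Aop A (C ** Y ** transpose Y)"

definition Smat :: "('m::finite \<Rightarrow> real^'n^'n) \<Rightarrow> real^'n^'n \<Rightarrow> real^'p^'n \<Rightarrow> real^'n^'n" where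
  "Smat A C Y = C - Aadj A (mult_mu A C Y)"

definition second_order_critical ::
  "('m::finite \<Rightarrow> real^'n^'n) \<Rightarrow> real^'n^'n \<Rightarrow> real^'p^'n \<Rightarrow> bool" where
  "second_order_critical A C Y \<longleftrightarrow>
     Smat A C Y ** Y = 0 \<and>
     (\<forall>Yd \<in> tangent A Y. 0 \<le> minner Yd (Smat A C Y ** Yd))"

definition AY_family :: "('m \<Rightarrow> real^'n^'n) \<Rightarrow> real^'p^'n \<Rightarrow> (real^'p^'n) set" where
  "AY_family A Y = (\<lambda>i. A i ** Y) ` UNIV"

definition AY_lin_indep :: "('m::finite \<Rightarrow> real^'n^'n) \<Rightarrow> real^'p^'n \<Rightarrow> bool" where
  "AY_lin_indep A Y \<longleftrightarrow>
     (\<forall>c::'m \<Rightarrow> real. (\<Sum>i\<in>UNIV. c i *\<^sub>R (A i ** Y)) = 0 \<longrightarrow> (\<forall>i. c i = 0))"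

text \<open>Assumption 1 (for the column count p = CARD('p), fixed by the type of Y).\<close>
definition assumption1 :: "('m::finite \<Rightarrow> real^'n^'n) \<Rightarrow> real^'m \<Rightarrow> ('p::finite) itself \<Rightarrow> bool" where
  "assumption1 A b _ \<longleftrightarrow>
     (\<forall>Y \<in> (Mp A b :: (real^'p^'n) set). AY_lin_indep A Y) \<or>
     (\<exists>U :: (real^'p^'n) set. open U \<and> Mp A b \<subseteq> U \<and>
        (\<exists>d. \<forall>Y\<in>U. dim (span (AY_family A Y)) = d))"

definition minimal_face :: "(real^'n^'n) set \<Rightarrow> real^'n^'n \<Rightarrow> (real^'n^'n) set" where
  "minimal_face K X = (THE F. F face_of K \<and> X \<in> rel_interior F)"

end

theory Submission
  imports Defs
begin



definition outer :: "real^'n \<Rightarrow> real^'p \<Rightarrow> real^'p^'n" where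
  "outer u z = (\<chi> i j. u$i * z$j)"

lemma inner_outer: "(M::real^'p^'n) \<bullet> outer v z = v \<bullet> (M *v z)"
  unfolding outer_def inner_vec_def matrix_vector_mult_def
  by (simp add: sum_distrib_left mult_ac)

lemma mult_outer: "(S::real^'n^'m) ** outer u z = outer (S *v u) z"
  unfolding outer_def matrix_matrix_mult_def matrix_vector_mult_def
  by (simp add: vec_eq_iff sum_distrib_left sum_distrib_right mult_ac)

lemma outer_outer: "outer u z \<bullet> outer v z = (u \<bullet> v) * (z \<bullet> z)"
  unfolding outer_def inner_vec_def
  by (simp add: sum_distrib_left sum_distrib_right mult_ac)

lemma outer_mult_vec: "outer c z *v x = (z \<bullet> x) *\<^sub>R c"
  unfolding outer_def inner_vec_def matrix_vector_mult_def
  by (simp add: vec_eq_iff sum_distrib_left mult_ac)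

lemma scaleR_mat_vec: "((k::real) *\<^sub>R (A::real^'n^'m)) *v v = k *\<^sub>R (A *v v)"
  by (simp add: vec_eq_iff matrix_vector_mult_def sum_distrib_left mult_ac)

lemma sym_entry: "symmetric_mat X \<Longrightarrow> X$i$j = X$j$i"
  unfolding symmetric_mat_def transpose_def by (metis vec_lambda_beta)

lemma sym_swap: "symmetric_mat (X::real^'n^'n) \<Longrightarrow> y \<bullet> (X *v x) = x \<bullet> (X *v y)"
  unfolding symmetric_mat_def
  by (metis dot_lmul_matrix inner_commute transpose_matrix_vector)

lemma qf_add: "symmetric_mat (X::real^'n^'n) \<Longrightarrow>
   (x + y) \<bullet> (X *v (x + y)) = x \<bullet> (X *v x) + 2 * (y \<bullet> (X *v x)) + y \<bullet> (X *v y)"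
  using sym_swap[of X x y]
  by (simp add: matrix_vector_right_distrib inner_add_left inner_add_right)

lemma axis_lin: "(t *\<^sub>R axis a (1::real)) \<bullet> (X *v x) = t * (X *v x)$a"
  by (simp add: inner_axis')

lemma axis_col: "((X::real^'n^'m) *v axis a (1::real)) $ i = X$i$a"
  by (simp add: matrix_vector_mult_basis column_def)

lemma axis_dot[simp]: "axis a (1::real) \<bullet> v = v $ a"
  by (simp add: inner_axis')

lemma axis_qf: "(t *\<^sub>R axis a (1::real)) \<bullet> ((X::real^'n^'n) *v (t *\<^sub>R axis a 1)) = t * t * X$a$a"
  by (simp add: axis_col matrix_vector_mult_scaleR)

lemma psd_trace_aux:
  fixes S :: "real^'n^'n"
  assumes Spsd: "\<And>u. 0 \<le> u \<bullet> (S *v u)"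
  shows "finite K \<Longrightarrow> \<forall>X. symmetric_mat X \<and> (\<forall>x. 0 \<le> x \<bullet> (X *v x)) \<and>
          (\<forall>i j. i \<notin> K \<longrightarrow> X$i$j = 0) \<longrightarrow> 0 \<le> S \<bullet> X"
proof (induction K rule: finite_induct)
  case empty
  then show ?case by (auto simp: inner_vec_def)
next
  case (insert a K)
  show ?case
  proof (intro allI impI, elim conjE)
    fix X :: "real^'n^'n"
    assume sX: "symmetric_mat X" and pX: "\<forall>x. 0 \<le> x \<bullet> (X *v x)"
      and supp: "\<forall>i j. i \<notin> insert a K \<longrightarrow> X$i$j = 0"
    have daa: "0 \<le> X$a$a" using pX[rule_format, of "1 *\<^sub>R axis a 1"] axis_qf[of 1 a X] by simp
    show "0 \<le> S \<bullet> X"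
    proof (cases "X$a$a = 0")
      case True
      have row0: "X$a$j = 0" for j
      proof (rule ccontr)
        assume ne: "X$a$j \<noteq> 0"
        define t where "t = - (X$j$j + 1) / (2 * X$a$j)"
        have "0 \<le> (axis j 1 + t *\<^sub>R axis a 1) \<bullet> (X *v (axis j 1 + t *\<^sub>R axis a 1))"
          using pX by blast
        also have "\<dots> = X$j$j + 2 * (t * X$a$j)"
          using qf_add[OF sX, of "axis j 1" "t *\<^sub>R axis a 1"] axis_qf[of t a X] axis_qf[of 1 j X]
            True by (simp add: axis_col matrix_vector_mult_scaleR)
        also have "\<dots> = -1" using ne by (simp add: t_def field_simps)
        finally show False by simp
      qed
      have "\<forall>i j. i \<notin> K \<longrightarrow> X$i$j = 0"
        using supp row0 by (metis insert_iff)
      then show ?thesis using insert.IH sX pX by blast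
    next
      case False
      define d where "d = X$a$a"
      have dpos: "0 < d" using False daa d_def by simp
      define c where "c = X *v axis a 1"
      have cc: "c$i = X$i$a" for i by (simp add: c_def axis_col)
      define X' where "X' = X - (1/d) *\<^sub>R outer c c"
      have X'e: "X'$i$j = X$i$j - X$i$a * X$j$a / d" for i j
        by (simp add: X'_def outer_def cc)
      have sX': "symmetric_mat X'"
        unfolding symmetric_mat_def transpose_def
        by (simp add: vec_eq_iff X'e sym_entry[OF sX, of _ "_"] mult.commute)
      have a0: "X'$a$j = 0" for j
        using dpos by (simp add: X'e d_def sym_entry[OF sX, of a j])
      have supp': "\<forall>i j. i \<notin> K \<longrightarrow> X'$i$j = 0"
      proof (intro allI impI)
        fix i j assume iK: "i \<notin> K"
        show "X'$i$j = 0"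
        proof (cases "i = a")
          case True then show ?thesis using a0 by simp
        next
          case False then show ?thesis using supp iK by (simp add: X'e)
        qed
      qed
      have pX': "0 \<le> x \<bullet> (X' *v x)" for x
      proof -
        define t where "t = - (c \<bullet> x) / d"
        have ca: "(X *v x)$a = c \<bullet> x"
          using sym_swap[OF sX, of "axis a 1" x] by (simp add: c_def inner_commute)
        have "0 \<le> (x + t *\<^sub>R axis a 1) \<bullet> (X *v (x + t *\<^sub>R axis a 1))"
          using pX by blast
        also have "\<dots> = x \<bullet> (X *v x) + 2 * (t * (c \<bullet> x)) + t * t * d"
          using qf_add[OF sX, of x "t *\<^sub>R axis a 1"] axis_qf[of t a X] ca
          by (simp add: d_def axis_col matrix_vector_mult_scaleR)
        also have "\<dots> = x \<bullet> (X *v x) - (c \<bullet> x) * (c \<bullet> x) / d"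
          using dpos by (simp add: t_def field_simps power2_eq_square)
        also have "\<dots> = x \<bullet> (X' *v x)"
          by (simp add: X'_def matrix_vector_mult_diff_rdistrib outer_mult_vec inner_diff_right
                 scaleR_mat_vec inner_commute)
        finally show ?thesis .
      qed
      have "0 \<le> S \<bullet> X'" using insert.IH sX' pX' supp' by blast
      moreover have "0 \<le> (1/d) * (c \<bullet> (S *v c))" using dpos Spsd by simp
      moreover have "S \<bullet> X = S \<bullet> X' + (1/d) * (c \<bullet> (S *v c))"
        by (simp add: X'_def inner_diff_right inner_outer)
      ultimately show ?thesis by linarith
    qed
  qed
qed

lemma psd_trace:
  fixes S X :: "real^'n^'n"
  assumes "\<And>u. 0 \<le> u \<bullet> (S *v u)" "symmetric_mat X" "\<forall>x. 0 \<le> x \<bullet> (X *v x)"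
  shows "0 \<le> S \<bullet> X"
proof -
  have "finite (UNIV::'n set)" by simp
  from psd_trace_aux[OF assms(1) this] assms(2,3) show ?thesis by blast
qed

lemma minner_inner: "minner U V = U \<bullet> V"
  unfolding minner_def trace_def inner_vec_def matrix_matrix_mult_def transpose_def
  by (simp add: sum.swap[of _ "UNIV::'a set"])

lemma S_psd:
  fixes S :: "real^'n^'n" and Y :: "real^'p^'n"
  assumes sS: "symmetric_mat S" and SY: "S ** Y = 0"
    and soc: "\<forall>Yd \<in> T. 0 \<le> minner Yd (S ** Yd)"
    and ex: "\<exists>z W. z \<noteq> 0 \<and> outer u z + Y ** (W::real^'p^'p) \<in> T"
  shows "0 \<le> u \<bullet> (S *v u)"
proof -
  obtain z and W :: "real^'p^'p" where z: "z \<noteq> 0" and inT: "outer u z + Y ** W \<in> T"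
    using ex by blast
  define Yd where "Yd = outer u z + Y ** W"
  have SYd: "S ** Yd = outer (S *v u) z"
    by (simp add: Yd_def matrix_add_ldistrib mult_outer matrix_mul_assoc SY)
  have tz: "transpose Y *v (S *v u) = 0"
  proof -
    have "transpose Y ** S = transpose (S ** Y)"
      using sS by (simp add: matrix_transpose_mul symmetric_mat_def)
    then have "transpose Y ** S = 0" using SY by (simp add: transpose_def vec_eq_iff)
    then show ?thesis by (simp add: matrix_vector_mul_assoc)
  qed
  have cross: "(Y ** W) \<bullet> outer (S *v u) z = 0"
  proof -
    have "(Y ** W) \<bullet> outer (S *v u) z = (S *v u) \<bullet> (Y *v (W *v z))"
      by (simp add: inner_outer matrix_vector_mul_assoc)
    also have "\<dots> = (transpose Y *v (S *v u)) \<bullet> (W *v z)"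
      by (simp add: dot_lmul_matrix)
    finally show ?thesis using tz by simp
  qed
  have "0 \<le> minner Yd (S ** Yd)" using soc inT Yd_def by blast
  also have "\<dots> = (u \<bullet> (S *v u)) * (z \<bullet> z)"
    unfolding minner_inner SYd by (simp add: Yd_def inner_add_left cross outer_outer)
  finally have "0 \<le> (u \<bullet> (S *v u)) * (z \<bullet> z)" .
  moreover have "0 < z \<bullet> z" using z by simp
  ultimately show ?thesis by (simp add: zero_le_mult_iff)
qed

lemma Aadj_entry: "(Aadj A \<nu>)$i$j = (\<Sum>k\<in>UNIV. \<nu>$k * A k $i$j)"
  by (simp add: Aadj_def sum_component)

lemma Smat_sym:
  assumes "\<forall>i. symmetric_mat (A i)" "symmetric_mat C"
  shows "symmetric_mat (Smat A C Y)"
  using assms unfolding symmetric_mat_def Smat_def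
  by (simp add: vec_eq_iff Aadj_entry transpose_def)

lemma outer_sdp:
  fixes Z :: "real^'p^'n"
  shows "symmetric_mat (Z ** transpose Z) \<and> (\<forall>x. 0 \<le> x \<bullet> ((Z ** transpose Z) *v x))"
proof
  show "symmetric_mat (Z ** transpose Z)"
    by (simp add: symmetric_mat_def matrix_transpose_mul)
  show "\<forall>x. 0 \<le> x \<bullet> ((Z ** transpose Z) *v x)"
  proof
    fix x :: "real^'n"
    have "x \<bullet> ((Z ** transpose Z) *v x) = (transpose Z *v x) \<bullet> (transpose Z *v x)"
      by (simp add: matrix_vector_mul_assoc[symmetric] dot_lmul_matrix[symmetric])
    then show "0 \<le> x \<bullet> ((Z ** transpose Z) *v x)" by simp
  qed
qed

lemma gobj_eq: "gobj C Z = minner C (Z ** transpose Z)"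
  unfolding gobj_def minner_def
  by (metis matrix_transpose_mul matrix_mul_assoc trace_mul_sym)

lemma main_from_psd:
  fixes A :: "'m::finite \<Rightarrow> real^'n^'n" and Y :: "real^'p^'n"
  assumes symA: "\<forall>i. symmetric_mat (A i)" and symC: "symmetric_mat C"
    and Y_in: "Y \<in> Mp A b"
    and SY: "Smat A C Y ** Y = 0"
    and Spsd: "\<And>u. 0 \<le> u \<bullet> (Smat A C Y *v u)"
  shows "(\<forall>Z :: real^'p^'n \<in> Mp A b. gobj C Y \<le> gobj C Z) \<and>
         Y ** transpose Y \<in> SDP_set A b \<and>
         (\<forall>X' \<in> SDP_set A b. minner C (Y ** transpose Y) \<le> minner C X')"
proof -
  define S where "S = Smat A C Y"
  define \<mu> where "\<mu> = mult_mu A C Y"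
  have sS: "symmetric_mat S" using Smat_sym[OF symA symC] S_def by blast
  have Cdec: "C = S + Aadj A \<mu>" by (simp add: S_def \<mu>_def Smat_def)
  have key: "minner C X' = S \<bullet> X' + (\<Sum>k\<in>UNIV. \<mu>$k * b$k)" if "X' \<in> SDP_set A b" for X'
  proof -
    have "Aop A X' = b" using that by (simp add: SDP_set_def)
    then have "A k \<bullet> X' = b$k" for k by (metis Aop_def minner_inner vec_lambda_beta)
    then show ?thesis
      by (subst Cdec) (simp add: minner_inner inner_add_left Aadj_def inner_sum_left)
  qed
  have inY: "Y ** transpose Y \<in> SDP_set A b"
    using Y_in outer_sdp[of Y] by (simp add: SDP_set_def Mp_def psd_def)
  have S0: "S \<bullet> (Y ** transpose Y) = 0"
  proof -
    have "S \<bullet> (Y ** transpose Y) = trace (transpose S ** (Y ** transpose Y))"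
      by (simp add: minner_inner[symmetric] minner_def)
    also have "\<dots> = 0" using sS SY
      by (simp add: symmetric_mat_def matrix_mul_assoc S_def trace_def)
    finally show ?thesis .
  qed
  have opt: "minner C (Y ** transpose Y) \<le> minner C X'" if "X' \<in> SDP_set A b" for X'
  proof -
    have "0 \<le> S \<bullet> X'"
      using psd_trace[of S X'] Spsd that S_def by (auto simp: SDP_set_def psd_def)
    then show ?thesis using key[OF that] key[OF inY] S0 by simp
  qed
  have "\<forall>Z :: real^'p^'n \<in> Mp A b. gobj C Y \<le> gobj C Z"
  proof
    fix Z :: "real^'p^'n" assume "Z \<in> Mp A b"
    then have "Z ** transpose Z \<in> SDP_set A b"
      using outer_sdp[of Z] by (simp add: SDP_set_def Mp_def psd_def)
    then show "gobj C Y \<le> gobj C Z" using opt by (simp add: gobj_eq)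
  qed
  then show ?thesis using inY opt by blast
qed



lemma rank_nullity_le:
  fixes f :: "'a::euclidean_space \<Rightarrow> 'b::euclidean_space"
  assumes S: "subspace S" and lf: "linear f"
  shows "dim S \<le> dim (S \<inter> {x. f x = 0}) + dim (f ` S)"
proof -
  define K where "K = S \<inter> {x. f x = 0}"
  have sK: "subspace K" unfolding K_def
    using S lf by (auto simp: subspace_def linear_0 linear_add linear_scale)
  define S' where "S' = {x \<in> S. \<forall>k\<in>K. orthogonal x k}"
  have sS': "subspace S'"
    using S unfolding S'_def subspace_def orthogonal_def
    by (auto simp: inner_add_left)
  have cover: "S \<subseteq> {x + y |x y. x \<in> K \<and> y \<in> S'}"
  proof
    fix x assume xS: "x \<in> S"
    obtain y z where y: "y \<in> span K" and z: "\<And>w. w \<in> span K \<Longrightarrow> orthogonal z w" and xyz: "x = y + z"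
      using orthogonal_subspace_decomp_exists[of K x] by blast
    have spK: "span K = K" using sK by (simp add: span_eq_iff)
    have yK: "y \<in> K" using y by (simp only: spK)
    have "z \<in> S" using xyz xS yK S unfolding K_def
      by (metis IntD1 add_diff_cancel_left' subspace_diff)
    then have "z \<in> S'" using z span_base unfolding S'_def by blast
    then show "x \<in> {x + y |x y. x \<in> K \<and> y \<in> S'}" using yK xyz by blast
  qed
  have "dim S \<le> dim {x + y |x y. x \<in> K \<and> y \<in> S'}" by (rule dim_subset[OF cover])
  also have "\<dots> \<le> dim K + dim S'" using dim_sums_Int[OF sK sS'] by linarith
  also have "dim S' = dim (f ` S')"
  proof (rule dim_image_eq[symmetric, OF lf])
    show "inj_on f (span S')"
      unfolding inj_on_def
    proof (intro ballI impI)
      fix x y assume x: "x \<in> span S'" and y: "y \<in> span S'" and e: "f x = f y"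
      have spS: "span S' = S'" using sS' by (simp add: span_eq_iff)
      have "x \<in> S'" "y \<in> S'" using x y by (simp_all only: spS)
      then have xy: "x - y \<in> S'" using sS' by (simp add: subspace_diff)
      then have "x - y \<in> K" using e lf unfolding K_def S'_def by (simp add: linear_diff)
      then have "orthogonal (x - y) (x - y)" using xy unfolding S'_def by blast
      then show "x = y" by (simp add: orthogonal_def)
    qed
  qed
  also have "dim (f ` S') \<le> dim (f ` S)"
    by (rule dim_subset) (auto simp: S'_def)
  finally show ?thesis by (simp add: K_def)
qed

lemma face_exists:
  fixes S :: "'a::euclidean_space set"
  assumes cS: "convex S" and xS: "x \<in> S"
  shows "\<exists>F. F face_of S \<and> x \<in> rel_interior F"
proof -
  have "\<forall>T. T face_of S \<and> x \<in> T \<and> nat (aff_dim T + 1) = n \<longrightarrow> (\<exists>F. F face_of S \<and> x \<in> rel_interior F)" for n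
  proof (induction n rule: less_induct)
    case (less n)
    show ?case
    proof (intro allI impI, elim conjE)
      fix T assume TS: "T face_of S" and xT: "x \<in> T" and nT: "nat (aff_dim T + 1) = n"
      have cT: "convex T" using TS face_of_imp_convex by blast
      show "\<exists>F. F face_of S \<and> x \<in> rel_interior F"
      proof (cases "x \<in> rel_interior T")
        case True then show ?thesis using TS by blast
      next
        case False
        obtain a where a: "a \<noteq> 0" and le: "\<And>y. y \<in> T \<Longrightarrow> a \<bullet> x \<le> a \<bullet> y"
          and lt: "\<And>y. y \<in> rel_interior T \<Longrightarrow> a \<bullet> x < a \<bullet> y"
          using supporting_hyperplane_rel_boundary[OF cT xT False] by blast
        define T' where "T' = T \<inter> {y. a \<bullet> y = a \<bullet> x}"
        have T'T: "T' face_of T" unfolding T'_def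
          using face_of_Int_supporting_hyperplane_ge[OF cT, where a=a and b="a \<bullet> x"] le by blast
        have T'S: "T' face_of S" using face_of_trans[OF T'T TS] .
        have xT': "x \<in> T'" using xT by (simp add: T'_def)
        obtain y where y: "y \<in> rel_interior T"
          using rel_interior_eq_empty[OF cT] xT by blast
        have "y \<notin> T'" using lt[OF y] by (simp add: T'_def)
        moreover have "y \<in> T" using y rel_interior_subset by blast
        ultimately have "T' \<noteq> T" by blast
        then have "aff_dim T' < aff_dim T" using face_of_aff_dim_lt[OF cT T'T] by blast
        moreover have "aff_dim T' \<ge> 0" using xT' aff_dim_negative_iff[of T'] by (metis empty_iff not_less)
        ultimately have "nat (aff_dim T' + 1) < n" using nT by linarith
        then show ?thesis using less.IH T'S xT' by blast
      qed
    qed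
  qed
  moreover have "S face_of S" using cS by (simp add: face_of_refl)
  ultimately show ?thesis using xS by blast
qed

lemma minimal_face_props:
  fixes K :: "(real^'n^'n) set"
  assumes "convex K" "X \<in> K"
  shows "minimal_face K X face_of K \<and> X \<in> rel_interior (minimal_face K X)"
proof -
  obtain F where F: "F face_of K \<and> X \<in> rel_interior F" using face_exists[OF assms] by blast
  have "\<exists>!F. F face_of K \<and> X \<in> rel_interior F"
  proof (rule ex1I[of _ F])
    show "F face_of K \<and> X \<in> rel_interior F" by (rule F)
    fix G assume "G face_of K \<and> X \<in> rel_interior G"
    then show "G = F" using F face_of_eq[of G K F] by blast
  qed
  then show ?thesis unfolding minimal_face_def by (rule theI')
qed



lemma count_pairs:
  fixes f :: "'p::finite \<Rightarrow> nat"
  assumes inj: "inj f"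
  shows "2 * card {(i,j). f j \<le> f i} = CARD('p) * CARD('p) + CARD('p)"
proof -
  define P where "P = {(i::'p,j). f j \<le> f i}"
  define P' where "P' = {(i::'p,j). f i \<le> f j}"
  have "P' = prod.swap ` P" unfolding P_def P'_def by auto
  then have cP': "card P' = card P" by (simp add: card_image)
  have U: "P \<union> P' = UNIV" unfolding P_def P'_def by auto
  have I: "P \<inter> P' = (\<lambda>i. (i,i)) ` UNIV"
    unfolding P_def P'_def using inj by (auto simp: inj_eq) 
  have cI: "card (P \<inter> P') = CARD('p)" unfolding I by (simp add: card_image inj_on_def)
  have cU: "card (P \<union> P') = CARD('p) * CARD('p)"
    unfolding U by (metis UNIV_Times_UNIV card_cartesian_product)
  have "card P + card P' = card (P \<union> P') + card (P \<inter> P')"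
    by (rule card_Un_Int) auto
  then show ?thesis using cP' cI cU by (simp add: P_def)
qed

lemma dim_sym:
  "CARD('p) * (CARD('p) + 1) \<le> 2 * dim {W::real^'p::finite^'p. transpose W = W}"
proof -
  obtain f :: "'p \<Rightarrow> nat" and n where "f ` UNIV = {..<n}" and inj: "inj f"
    using finite_imp_inj_to_nat_seg[of "UNIV::'p set"] by auto
  define P where "P = {(i::'p,j). f j \<le> f i}"
  define E where "E = (\<lambda>(i,j). axis i (axis j (1::real))) ` P"
  define L where "L = {M :: real^'p^'p. \<forall>i j. f i < f j \<longrightarrow> M$i$j = 0}"
  define Q where "Q = (\<lambda>M :: real^'p^'p. \<chi> i j. if f j \<le> f i then M$i$j else M$j$i)"
  have Qe: "Q M $ i $ j = (if f j \<le> f i then M$i$j else M$j$i)" for M i j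
    by (simp add: Q_def)
  have sL: "subspace L" unfolding L_def subspace_def by auto
  have EL: "E \<subseteq> L"
  proof
    fix x assume "x \<in> E"
    then obtain i j where ij: "f j \<le> f i" and x: "x = axis i (axis j 1)"
      unfolding E_def P_def by auto
    show "x \<in> L" unfolding L_def x mem_Collect_eq
    proof (intro allI impI)
      fix k l assume "f k < f l"
      then have "\<not> (k = i \<and> l = j)" using ij by auto
      then show "axis i (axis j (1::real)) $ k $ l = 0" by (auto simp: axis_def)
    qed
  qed
  have spE: "span E \<subseteq> L" using span_minimal[OF EL sL] .
  have lQ: "linear Q" unfolding Q_def by (rule linearI) (auto simp: vec_eq_iff)
  have injQ: "inj_on Q (span E)"
  proof (rule inj_onI)
    fix M N assume "M \<in> span E" "N \<in> span E" and e: "Q M = Q N"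
    then have MinL: "M \<in> L" "N \<in> L" using spE by auto
    show "M = N"
    proof (subst vec_eq_iff, intro allI, subst vec_eq_iff, intro allI)
      fix i j
      show "M$i$j = N$i$j"
      proof (cases "f j \<le> f i")
        case True
        then show ?thesis using e Qe[of M i j] Qe[of N i j] by simp
      next
        case False
        then show ?thesis using MinL unfolding L_def by auto
      qed
    qed
  qed
  have QS: "Q ` E \<subseteq> {W. transpose W = W}"
  proof clarify
    fix M :: "real^'p^'p"
    show "transpose (Q M) = Q M"
    proof (subst vec_eq_iff, intro allI, subst vec_eq_iff, intro allI)
      fix i j
      have "f i = f j \<Longrightarrow> i = j" using inj by (simp add: inj_eq)
      then show "transpose (Q M) $ i $ j = Q M $ i $ j"
        unfolding transpose_def vec_lambda_beta Qe
        by (cases "f i \<le> f j"; cases "f j \<le> f i") auto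
    qed
  qed
  have indE: "independent E"
    by (rule independent_mono[OF independent_Basis]) (auto simp: E_def)
  have injP: "inj_on (\<lambda>(i,j). axis i (axis j (1::real))) P"
    by (auto simp: inj_on_def axis_eq_axis)
  have "card P = card E" unfolding E_def using card_image[OF injP] by simp
  also have "\<dots> = dim E" using dim_eq_card_independent[OF indE] by simp
  also have "\<dots> = dim (Q ` E)" using dim_image_eq[OF lQ injQ] by simp
  also have "\<dots> \<le> dim {W::real^'p^'p. transpose W = W}" by (rule dim_subset[OF QS])
  finally show ?thesis using count_pairs[OF inj] unfolding P_def by (simp add: algebra_simps)
qed


lemma transpose_add: "transpose ((X::real^'n^'m) + Z) = transpose X + transpose Z"
  by (simp add: transpose_def vec_eq_iff)

lemma transpose_scaleR: "transpose ((c::real) *\<^sub>R (X::real^'n^'m)) = c *\<^sub>R transpose X"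
  by (simp add: transpose_def vec_eq_iff)

lemma mmult_scaleR: "(Y::real^'k^'n) ** ((c::real) *\<^sub>R W) = c *\<^sub>R (Y ** W)"
  by (simp add: matrix_matrix_mult_def vec_eq_iff sum_distrib_left mult_ac)

lemma mmult_radd: "((B::real^'k^'n) + C) ** (Z::real^'q^'k) = B ** Z + C ** Z"
  by (simp add: matrix_matrix_mult_def vec_eq_iff sum.distrib algebra_simps)

lemma mmult_scaleR_left: "((c::real) *\<^sub>R (B::real^'k^'n)) ** (Z::real^'q^'k) = c *\<^sub>R (B ** Z)"
  by (simp add: matrix_matrix_mult_def vec_eq_iff sum_distrib_left mult_ac)

lemma sdp_convex:
  fixes A :: "'m::finite \<Rightarrow> real^'n^'n"
  shows "convex (SDP_set A b)"
  unfolding convex_def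
proof (intro ballI allI impI)
  fix X Z :: "real^'n^'n" and s t :: real
  assume X: "X \<in> SDP_set A b" and Z: "Z \<in> SDP_set A b" and st: "0 \<le> s" "0 \<le> t" "s + t = 1"
  have sym: "symmetric_mat (s *\<^sub>R X + t *\<^sub>R Z)"
    using X Z by (simp add: SDP_set_def symmetric_mat_def transpose_add transpose_scaleR)
  have "Aop A (s *\<^sub>R X + t *\<^sub>R Z) = s *\<^sub>R Aop A X + t *\<^sub>R Aop A Z"
    by (simp add: Aop_def vec_eq_iff minner_inner inner_add_right)
  also have "\<dots> = b" using X Z st by (simp add: SDP_set_def flip: scaleR_add_left)
  finally have Ab: "Aop A (s *\<^sub>R X + t *\<^sub>R Z) = b" .
  have "0 \<le> x \<bullet> ((s *\<^sub>R X + t *\<^sub>R Z) *v x)" for x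
  proof -
    have "0 \<le> x \<bullet> (X *v x)" "0 \<le> x \<bullet> (Z *v x)" using X Z by (auto simp: SDP_set_def psd_def)
    then show ?thesis using st
      by (simp add: matrix_vector_mult_add_rdistrib scaleR_mat_vec inner_add_right)
  qed
  then show "s *\<^sub>R X + t *\<^sub>R Z \<in> SDP_set A b"
    using sym Ab by (simp add: SDP_set_def psd_def)
qed

lemma trace_identity:
  "minner (Ai::real^'n^'n) ((Y::real^'p^'n) ** W ** transpose Y) = minner (Ai ** Y) (Y ** W)"
proof -
  have "minner Ai (Y ** W ** transpose Y) = trace ((transpose Ai ** (Y ** W)) ** transpose Y)"
    by (simp add: minner_def matrix_mul_assoc)
  also have "\<dots> = trace (transpose Y ** (transpose Ai ** (Y ** W)))" by (rule trace_mul_sym)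
  also have "\<dots> = minner (Ai ** Y) (Y ** W)"
    by (simp add: minner_def matrix_transpose_mul matrix_mul_assoc)
  finally show ?thesis .
qed

lemma face_lower:
  fixes A :: "'m::finite \<Rightarrow> real^'n^'n" and Y :: "real^'p^'n"
  assumes Y_in: "Y \<in> Mp A b" and injY: "inj ((*v) Y)"
  shows "int (dim {W::real^'p^'p. transpose W = W \<and> (\<chi> i. (A i ** Y) \<bullet> (Y ** W)) = (0::real^'m)})
           \<le> aff_dim (minimal_face (SDP_set A b) (Y ** transpose Y))"
proof -
  define K where "K = SDP_set A b"
  define X0 where "X0 = Y ** transpose Y"
  define F where "F = minimal_face K X0"
  define V where "V = {W::real^'p^'p. transpose W = W \<and> (\<chi> i. (A i ** Y) \<bullet> (Y ** W)) = (0::real^'m)}"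
  have X0K: "X0 \<in> K"
    using Y_in outer_sdp[of Y] by (simp add: K_def X0_def SDP_set_def Mp_def psd_def)
  have Fp: "F face_of K" "X0 \<in> rel_interior F"
    using minimal_face_props[OF sdp_convex X0K[unfolded K_def]] by (simp_all add: F_def K_def)
  have sV: "subspace V"
    unfolding V_def subspace_def
    by (simp add: transpose_add transpose_scaleR matrix_add_ldistrib mmult_scaleR vec_eq_iff
        inner_add_right transpose_def)
  define L where "L = (\<lambda>W::real^'p^'p. Y ** W ** transpose Y)"
  have lL: "linear L" unfolding L_def
    by (rule linearI) (simp_all add: matrix_add_ldistrib mmult_radd mmult_scaleR mmult_scaleR_left)
  obtain B where BY: "B ** Y = mat 1" using injY matrix_left_invertible_injective by blast
  have invL: "B ** L W ** transpose B = W" for W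
  proof -
    have "B ** L W ** transpose B = (B ** Y) ** W ** transpose (B ** Y)"
      by (simp add: L_def matrix_mul_assoc matrix_transpose_mul)
    then show ?thesis using BY by simp
  qed
  have injL: "inj L" by (metis invL injI)
  define \<delta> :: real where "\<delta> = 1 / (real CARD('p) * real CARD('p))"
  have dpos: "0 < \<delta>" by (simp add: \<delta>_def)
  have memK: "X0 + L W \<in> K" if WV: "W \<in> V" and Wn: "norm W < \<delta>" for W
  proof -
    have tW: "transpose W = W" using WV by (simp add: V_def)
    have sym: "symmetric_mat (X0 + L W)"
      by (simp add: symmetric_mat_def X0_def L_def transpose_add matrix_transpose_mul tW matrix_mul_assoc)
    have "Aop A (X0 + L W) = b"
    proof -
      have "A i \<bullet> L W = 0" for i
      proof -
        have "(\<chi> i. (A i ** Y) \<bullet> (Y ** W)) $ i = (0::real^'m) $ i" using WV by (simp add: V_def)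
        then show ?thesis using trace_identity[of "A i" Y W] by (simp add: L_def minner_inner)
      qed
      moreover have "Aop A X0 = b" using Y_in by (simp add: Mp_def X0_def)
      ultimately show ?thesis by (simp add: Aop_def vec_eq_iff minner_inner inner_add_right)
    qed
    moreover have "0 \<le> x \<bullet> ((X0 + L W) *v x)" for x
    proof -
      define w where "w = transpose Y *v x"
      have e1: "x \<bullet> (Y *v v) = w \<bullet> v" for v
        by (simp add: w_def dot_lmul_matrix[symmetric])
      have "x \<bullet> ((X0 + L W) *v x) = w \<bullet> w + w \<bullet> (W *v w)"
        by (simp add: X0_def L_def matrix_vector_mult_add_rdistrib inner_add_right
              matrix_vector_mul_assoc[symmetric] e1 w_def)
      moreover have "\<bar>w \<bullet> (W *v w)\<bar> \<le> w \<bullet> w"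
      proof -
        have "norm (W *v w) \<le> onorm ((*v) W) * norm w" by (rule onorm) simp
        also have "\<dots> \<le> (\<Sum>i\<in>UNIV. \<Sum>j\<in>UNIV. \<bar>W $ i $ j\<bar>) * norm w"
          by (rule mult_right_mono[OF onorm_le_matrix_component_sum]) simp
        finally have b1: "norm (W *v w) \<le> (\<Sum>i\<in>UNIV. \<Sum>j\<in>UNIV. \<bar>W $ i $ j\<bar>) * norm w" .
        have cij: "\<bar>W $ i $ j\<bar> \<le> norm W" for i j
        proof -
          have "\<bar>W$i$j\<bar> \<le> norm (W$i)" by (rule component_le_norm_cart)
          moreover have "norm (W$i) \<le> norm W"
            unfolding norm_vec_def[of W] by (rule member_le_L2_set) simp_all
          ultimately show ?thesis by linarith
        qed
        have "(\<Sum>i\<in>UNIV. \<Sum>j\<in>UNIV. \<bar>W $ i $ j\<bar>) \<le> (\<Sum>i\<in>(UNIV::'p set). \<Sum>j\<in>(UNIV::'p set). norm W)"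
          by (intro sum_mono cij)
        also have "\<dots> = real CARD('p) * real CARD('p) * norm W" by simp
        also have "\<dots> \<le> 1"
        proof -
          have "real CARD('p) * real CARD('p) * norm W \<le> real CARD('p) * real CARD('p) * \<delta>"
            using Wn by (intro mult_left_mono) auto
          then show ?thesis by (simp add: \<delta>_def)
        qed
        finally have b2: "(\<Sum>i\<in>UNIV. \<Sum>j\<in>UNIV. \<bar>W $ i $ j\<bar>) \<le> 1" .
        have "norm (W *v w) \<le> norm w"
          using b1 mult_right_mono[OF b2, of "norm w"] by simp
        then have "norm w * norm (W *v w) \<le> norm w * norm w"
          by (simp add: mult_left_mono)
        then have "\<bar>w \<bullet> (W *v w)\<bar> \<le> norm w * norm w"
          using Cauchy_Schwarz_ineq2[of w "W *v w"] by linarith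
        then show ?thesis by (simp add: dot_square_norm power2_eq_square)
      qed
      ultimately show ?thesis by linarith
    qed
    ultimately show ?thesis using sym by (simp add: K_def SDP_set_def psd_def)
  qed
  define E where "E = (\<lambda>W. X0 + L W) ` (V \<inter> ball 0 \<delta>)"
  have EF: "E \<subseteq> F"
  proof
    fix e assume "e \<in> E"
    then obtain W where W: "W \<in> V" "norm W < \<delta>" and e: "e = X0 + L W"
      by (auto simp: E_def dist_norm)
    show "e \<in> F"
    proof (cases "W = 0")
      case True
      then show ?thesis using e Fp(2) rel_interior_subset linear_0[OF lL] by auto
    next
      case False
      have LW0: "L W \<noteq> 0" using False injL lL by (metis linear_0 injD)
      have mW: "-W \<in> V" using W(1) sV by (simp add: subspace_neg)
      have a: "X0 + L W \<in> K" using memK W by blast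
      have c: "X0 - L W \<in> K" using memK[OF mW] W(2) linear_neg[OF lL] by simp
      have ne: "X0 + L W \<noteq> X0 - L W"
      proof
        assume "X0 + L W = X0 - L W"
        then have "(2::real) *\<^sub>R L W = 0" by (simp add: scaleR_2 algebra_simps)
        then show False using LW0 by simp
      qed
      have "midpoint (X0 + L W) (X0 - L W) = X0"
        by (simp add: midpoint_def scaleR_2[symmetric] algebra_simps)
      then have "X0 \<in> open_segment (X0 + L W) (X0 - L W)"
        using midpoint_in_open_segment ne by metis
      then show ?thesis using face_ofD[OF Fp(1) _ a c] Fp(2) rel_interior_subset e by blast
    qed
  qed
  have "aff_dim E = aff_dim (V \<inter> ball 0 \<delta>)"
  proof -
    have "E = (+) X0 ` (L ` (V \<inter> ball 0 \<delta>))" by (auto simp: E_def image_image)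
    then show ?thesis using aff_dim_translation_eq aff_dim_injective_linear_image[OF lL injL] by metis
  qed
  also have "\<dots> = aff_dim V"
  proof (rule aff_dim_convex_Int_open[OF subspace_imp_convex[OF sV] open_ball])
    have "0 \<in> V \<inter> ball 0 \<delta>" using subspace_0[OF sV] dpos by simp
    then show "V \<inter> ball 0 \<delta> \<noteq> {}" by blast
  qed
  also have "\<dots> = int (dim V)" by (rule aff_dim_subspace[OF sV])
  finally have "int (dim V) = aff_dim E" ..
  also have "\<dots> \<le> aff_dim F" by (rule aff_dim_subset[OF EF])
  finally show ?thesis by (simp add: V_def F_def K_def X0_def)
qed
lemma case2:
  fixes A :: "'m::finite \<Rightarrow> real^'n^'n" and Y :: "real^'p^'n" and u :: "real^'n"
  assumes Y_in: "Y \<in> Mp A b" and injY: "inj ((*v) Y)"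
    and cond: "real_of_int (aff_dim (minimal_face (SDP_set A b) (Y ** transpose Y)))
          < real CARD('p) * (real CARD('p) + 1) / 2
            - real (dim (span (AY_family A Y))) + real CARD('p)"
  shows "\<exists>z (W::real^'p^'p). z \<noteq> 0 \<and> outer u z + Y ** W \<in> tangent A Y"
proof (rule ccontr)
  assume nex: "\<not> ?thesis"
  define G :: "real^'p^'n \<Rightarrow> real^'m" where "G = (\<lambda>D. \<chi> i. (A i ** Y) \<bullet> D)"
  have lG: "linear G" unfolding G_def
    by (rule linearI) (simp_all add: vec_eq_iff inner_add_right)
  have tanG: "D \<in> tangent A Y \<longleftrightarrow> G D = 0" for D
    by (simp add: tangent_def G_def minner_inner vec_eq_iff)
  have lYW: "linear (\<lambda>W::real^'p^'p. Y ** W)"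
    by (rule linearI) (simp_all add: matrix_add_ldistrib mmult_scaleR)
  define \<Phi>2 where "\<Phi>2 = (\<lambda>W::real^'p^'p. G (Y ** W))"
  have l2: "linear \<Phi>2" unfolding \<Phi>2_def using linear_compose[OF lYW lG] by (simp add: o_def)
  have lout: "linear (outer u :: real^'p \<Rightarrow> real^'p^'n)"
    by (rule linearI) (simp_all add: outer_def vec_eq_iff algebra_simps)
  define \<Phi>1 where "\<Phi>1 = (\<lambda>z::real^'p. G (outer u z))"
  have l1: "linear \<Phi>1" unfolding \<Phi>1_def using linear_compose[OF lout lG] by (simp add: o_def)
  have sumG: "G (outer u z + Y ** W) = \<Phi>1 z + \<Phi>2 W" for z W
    by (simp add: \<Phi>1_def \<Phi>2_def linear_add[OF lG])
  have nz: "\<Phi>1 z + \<Phi>2 W = 0 \<Longrightarrow> z = 0" for z W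
    using nex tanG sumG by metis
  have inj1: "inj \<Phi>1"
    unfolding linear_inj_iff_eq_0[OF l1]
  proof (intro allI impI)
    fix z assume "\<Phi>1 z = 0"
    then have "\<Phi>1 z + \<Phi>2 0 = 0" using linear_0[OF l2] by simp
    then show "z = 0" using nz by blast
  qed
  have int0: "range \<Phi>1 \<inter> range \<Phi>2 \<subseteq> {0}"
  proof
    fix v assume "v \<in> range \<Phi>1 \<inter> range \<Phi>2"
    then obtain z W where v1: "v = \<Phi>1 z" and v2: "v = \<Phi>2 W" by blast
    have "\<Phi>1 z + \<Phi>2 (-W) = 0" using v1 v2 linear_neg[OF l2] by simp
    then have "z = 0" using nz by blast
    then show "v \<in> {0}" using v1 linear_0[OF l1] by simp
  qed
  define fam where "fam = AY_family A Y"
  have dimR: "dim (range G) \<le> dim (span fam)"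
  proof -
    have "range G \<subseteq> G ` span fam"
    proof
      fix v assume "v \<in> range G"
      then obtain D where v: "v = G D" by blast
      obtain y w where y: "y \<in> span fam" and w: "\<And>x. x \<in> span fam \<Longrightarrow> orthogonal w x"
        and Dyw: "D = y + w"
        using orthogonal_subspace_decomp_exists[of fam D] by blast
      have inF: "A i ** Y \<in> span fam" for i by (rule span_base) (simp add: fam_def AY_family_def)
      have "(A i ** Y) \<bullet> w = 0" for i
      proof -
        have "orthogonal w (A i ** Y)" using w inF by blast
        then show ?thesis by (metis orthogonal_def inner_commute)
      qed
      then have "G w = 0" by (simp add: G_def vec_eq_iff)
      then have "v = G y" using v Dyw linear_add[OF lG] by simp
      then show "v \<in> G ` span fam" using y by blast
    qed
    then have "dim (range G) \<le> dim (G ` span fam)" by (rule dim_subset)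
    also have "\<dots> \<le> dim (span fam)" by (rule dim_image_le[OF lG])
    finally show ?thesis .
  qed
  have dsum: "CARD('p) + dim (range \<Phi>2) \<le> dim (range G)"
  proof -
    have s1: "subspace (range \<Phi>1)" using linear_subspace_image[OF l1 subspace_UNIV] by simp
    have s2: "subspace (range \<Phi>2)" using linear_subspace_image[OF l2 subspace_UNIV] by simp
    have "dim {x + y |x y. x \<in> range \<Phi>1 \<and> y \<in> range \<Phi>2} + dim (range \<Phi>1 \<inter> range \<Phi>2)
          = dim (range \<Phi>1) + dim (range \<Phi>2)" by (rule dim_sums_Int[OF s1 s2])
    moreover have "dim (range \<Phi>1 \<inter> range \<Phi>2) = 0" using int0 by simp
    moreover have "dim (range \<Phi>1) = CARD('p)"
    proof -
      have "dim (range \<Phi>1) = dim (UNIV :: (real^'p) set)"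
        by (rule dim_image_eq[OF l1]) (use inj1 in \<open>simp add: inj_on_def inj_def\<close>)
      then show ?thesis by simp
    qed
    moreover have "{x + y |x y. x \<in> range \<Phi>1 \<and> y \<in> range \<Phi>2} \<subseteq> range G"
    proof clarify
      fix z W
      have "\<Phi>1 z + \<Phi>2 W = G (outer u z + Y ** W)" using sumG by simp
      then show "\<Phi>1 z + \<Phi>2 W \<in> range G" by blast
    qed
    ultimately have "dim {x + y |x y. x \<in> range \<Phi>1 \<and> y \<in> range \<Phi>2} = CARD('p) + dim (range \<Phi>2)"
      and sub: "{x + y |x y. x \<in> range \<Phi>1 \<and> y \<in> range \<Phi>2} \<subseteq> range G" by simp_all
    moreover have "dim {x + y |x y. x \<in> range \<Phi>1 \<and> y \<in> range \<Phi>2} \<le> dim (range G)"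
      by (rule dim_subset[OF sub])
    ultimately show ?thesis by linarith
  qed
  define Sym where "Sym = {W::real^'p^'p. transpose W = W}"
  have sSym: "subspace Sym"
    unfolding Sym_def subspace_def by (simp add: transpose_add transpose_scaleR vec_eq_iff transpose_def)
  define V where "V = {W::real^'p^'p. transpose W = W \<and> (\<chi> i. (A i ** Y) \<bullet> (Y ** W)) = (0::real^'m)}"
  have VV: "V = Sym \<inter> {W. \<Phi>2 W = 0}" by (auto simp: V_def Sym_def \<Phi>2_def G_def)
  have rn: "dim Sym \<le> dim V + dim (\<Phi>2 ` Sym)"
    using rank_nullity_le[OF sSym l2] VV by simp
  have r2: "dim (\<Phi>2 ` Sym) \<le> dim (range \<Phi>2)" by (rule dim_subset) auto
  have ds: "CARD('p) * (CARD('p) + 1) \<le> 2 * dim Sym" using dim_sym unfolding Sym_def .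
  have fl: "int (dim V) \<le> aff_dim (minimal_face (SDP_set A b) (Y ** transpose Y))"
    using face_lower[OF Y_in injY] unfolding V_def .
  have a1: "real (dim V) < real CARD('p) * (real CARD('p) + 1) / 2
            - real (dim (span fam)) + real CARD('p)"
  proof -
    have "real_of_int (int (dim V)) \<le> real_of_int (aff_dim (minimal_face (SDP_set A b) (Y ** transpose Y)))"
      using fl by (simp only: of_int_le_iff)
    then show ?thesis using cond unfolding fam_def by simp
  qed
  have a2: "real CARD('p) * (real CARD('p) + 1) \<le> 2 * real (dim Sym)"
  proof -
    have "real (CARD('p) * (CARD('p) + 1)) \<le> real (2 * dim Sym)" using ds by (simp only: of_nat_le_iff)
    then show ?thesis by (simp add: algebra_simps)
  qed
  have a3: "real (dim Sym) \<le> real (dim V) + real (dim (range \<Phi>2))"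
    using rn r2 by linarith
  have a4: "real CARD('p) + real (dim (range \<Phi>2)) \<le> real (dim (span fam))"
    using dsum dimR by linarith
  from a1 a2 a3 a4 show False by linarith
qed

lemma case1:
  fixes A :: "'m::finite \<Rightarrow> real^'n^'n" and Y :: "real^'p^'n" and u :: "real^'n"
  assumes "\<not> inj ((*v) Y)"
  shows "\<exists>z (W::real^'p^'p). z \<noteq> 0 \<and> outer u z + Y ** W \<in> tangent A Y"
proof -
  obtain z where z: "z \<noteq> 0" "Y *v z = 0"
    using assms linear_inj_iff_eq_0[of "(*v) Y"] by auto
  have "outer u z + Y ** 0 \<in> tangent A Y"
    by (simp add: tangent_def minner_inner inner_outer matrix_vector_mul_assoc[symmetric] z)
  then show ?thesis using z by blast
qed

theorem theorem3:
  fixes A :: "'m::finite \<Rightarrow> real^'n^'n"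
    and b :: "real^'m"
    and C :: "real^'n^'n"
    and Y :: "real^'p^'n"
  assumes symA: "\<forall>i. symmetric_mat (A i)"
    and symC: "symmetric_mat C"
    and asm1: "assumption1 A b TYPE('p)"
    and Y_in: "Y \<in> Mp A b"
    and soc: "second_order_critical A C Y"
    and cond: "rank Y < CARD('p) \<or>
       (rank Y = CARD('p) \<and>
        real_of_int (aff_dim (minimal_face (SDP_set A b) (Y ** transpose Y)))
          < real CARD('p) * (real CARD('p) + 1) / 2
            - real (dim (span (AY_family A Y))) + real CARD('p))"
  shows "(\<forall>Z :: real^'p^'n \<in> Mp A b. gobj C Y \<le> gobj C Z) \<and>
         Y ** transpose Y \<in> SDP_set A b \<and>
         (\<forall>X' \<in> SDP_set A b. minner C (Y ** transpose Y) \<le> minner C X')"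
proof -
  have soc1: "Smat A C Y ** Y = 0"
    and soc2: "\<forall>Yd\<in>tangent A Y. 0 \<le> minner Yd (Smat A C Y ** Yd)"
    using soc unfolding second_order_critical_def by auto
  have ex: "\<exists>z (W::real^'p^'p). z \<noteq> 0 \<and> outer u z + Y ** W \<in> tangent A Y" for u
  proof (cases "inj ((*v) Y)")
    case True
    then have "rank Y = CARD('p)" using full_rank_injective by blast
    then have "real_of_int (aff_dim (minimal_face (SDP_set A b) (Y ** transpose Y)))
          < real CARD('p) * (real CARD('p) + 1) / 2
            - real (dim (span (AY_family A Y))) + real CARD('p)" using cond by simp
    then show ?thesis using case2[OF Y_in True] by blast
  next
    case False then show ?thesis using case1 by blast
  qed
  have Spsd: "0 \<le> u \<bullet> (Smat A C Y *v u)" for u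
    using S_psd[OF Smat_sym[OF symA symC] soc1 soc2 ex] .
  show ?thesis using main_from_psd[OF symA symC Y_in soc1 Spsd] .
qed

end
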